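(* Let $X,Y$ be complex Banach spaces, $U:X\to Y$ a non-null bounded linear operator with $\|U\|<\lambda$, $1\le p<\infty$, and $Z=(\mathbb C^n,\|\cdot\|)$ a Banach space whose canonical basis is normalized $1$-unconditional. Then for every $n$, $$\frac{K_\lambda(\mathbb D,p,U)}{n}\le A_\lambda(B_Z,p,U)\le\|Id:Z\to\ell_1^n\|\frac{K_\lambda(\mathbb D,p,U)}{n^{1/p}}.$$
   Context: $\mathbb D$ is the open unit disc. For a complete Reinhardt domain $\Omega\subset\mathbb C^k$ and bounded holomorphic $f:\Omega\to X$, $f(z)=\sum_\alpha a_\alpha z^\alpha$, $\|f\|_{\Omega,X}=\sup_\Omega\|f(z)\|_X$. $K_\lambda(\Omega,p,U)$: supremum of $r\ge0$ with $\sup_{z\in r\Omega}\sum_\alpha\|U(a_\alpha)z^\alpha\|_Y^p\le\lambda^p\|f\|_{\Omega,X}^p$ for all such $f$. $A_\lambda(\Omega,p,U)$: supremum of $\frac1k\sum_{i=1}^kr_i$ over $r\in\mathbb R^k_{\ge0}$ with $\sum_\alpha\|U(a_\alpha)\|_Y^pr^{p\alpha}\le\lambda^p\|f\|_{\Omega,X}^p$ for all such $f$. $B_Z$ is the open unit ball of $Z$. *)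

theory Defs
  imports "HOL-Analysis.Analysis"
begin

text \<open>Complex Banach space structure on a real Banach space type: an explicit
  complex scalar multiplication extending the real one, compatible with the norm.\<close>
definition complex_scaling :: "(complex \<Rightarrow> 'a::real_normed_vector \<Rightarrow> 'a) \<Rightarrow> bool" where
  "complex_scaling sc \<longleftrightarrow>
     (\<forall>c x y. sc c (x + y) = sc c x + sc c y) \<and>
     (\<forall>c d x. sc (c + d) x = sc c x + sc d x) \<and>
     (\<forall>c d x. sc c (sc d x) = sc (c * d) x) \<and>
     (\<forall>r x. sc (complex_of_real r) x = r *\<^sub>R x) \<and>
     (\<forall>c x. norm (sc c x) = cmod c * norm x)"

definition monom_pow :: "'a::comm_semiring_1 ^ 'k \<Rightarrow> nat ^ 'k \<Rightarrow> 'a" where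
  "monom_pow z \<alpha> = (\<Prod>i\<in>UNIV. (z $ i) ^ (\<alpha> $ i))"

text \<open>f is a bounded holomorphic function on the complete Reinhardt domain Omega with
  (monomial) power series coefficients a, i.e. f(z) = sum_alpha a_alpha z^alpha on Omega.\<close>
definition bhol_series ::
  "(complex \<Rightarrow> 'x::real_normed_vector \<Rightarrow> 'x) \<Rightarrow> (complex ^ 'k) set \<Rightarrow>
   (complex ^ 'k \<Rightarrow> 'x) \<Rightarrow> (nat ^ 'k \<Rightarrow> 'x) \<Rightarrow> bool" where
  "bhol_series scX \<Omega> f a \<longleftrightarrow>
     (\<forall>z\<in>\<Omega>. ((\<lambda>\<alpha>. scX (monom_pow z \<alpha>) (a \<alpha>)) has_sum f z) UNIV) \<and> bounded (f ` \<Omega>)"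

definition supnorm :: "(complex ^ 'k) set \<Rightarrow> (complex ^ 'k \<Rightarrow> 'x::real_normed_vector) \<Rightarrow> real" where
  "supnorm \<Omega> f = Sup ((\<lambda>z. norm (f z)) ` \<Omega>)"

text \<open>K_lambda(Omega,p,U). The (possibly infinite) sum of nonnegative terms being
  bounded by C is expressed as: all finite partial sums are bounded by C.\<close>
definition K_const ::
  "(complex \<Rightarrow> 'x::real_normed_vector \<Rightarrow> 'x) \<Rightarrow> (complex \<Rightarrow> 'y::real_normed_vector \<Rightarrow> 'y) \<Rightarrow>
   ('x \<Rightarrow> 'y) \<Rightarrow> real \<Rightarrow> real \<Rightarrow> (complex ^ 'k) set \<Rightarrow> real" where
  "K_const scX scY U lam p \<Omega> = Sup {r. r \<ge> 0 \<and>
     (\<forall>f a. bhol_series scX \<Omega> f a \<longrightarrow>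
        (\<forall>z\<in>(\<lambda>w. r *\<^sub>R w) ` \<Omega>. \<forall>F. finite F \<longrightarrow>
           (\<Sum>\<alpha>\<in>F. norm (scY (monom_pow z \<alpha>) (U (a \<alpha>))) powr p)
             \<le> lam powr p * supnorm \<Omega> f powr p))}"

definition A_const ::
  "(complex \<Rightarrow> 'x::real_normed_vector \<Rightarrow> 'x) \<Rightarrow>
   ('x \<Rightarrow> 'y::real_normed_vector) \<Rightarrow> real \<Rightarrow> real \<Rightarrow> (complex ^ 'k) set \<Rightarrow> real" where
  "A_const scX U lam p \<Omega> = Sup {(\<Sum>i\<in>UNIV. r $ i) / real CARD('k) | r :: real ^ 'k.
     (\<forall>i. r $ i \<ge> 0) \<and>
     (\<forall>f a. bhol_series scX \<Omega> f a \<longrightarrow>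
        (\<forall>F. finite F \<longrightarrow>
           (\<Sum>\<alpha>\<in>F. norm (U (a \<alpha>)) powr p * (monom_pow r \<alpha>) powr p)
             \<le> lam powr p * supnorm \<Omega> f powr p))}"

definition unit_disc1 :: "(complex ^ 1) set" where
  "unit_disc1 = {z. cmod (z $ 1) < 1}"

text \<open>N is a norm on C^n whose canonical basis is normalized and 1-unconditional
  (completeness is automatic in finite dimension).\<close>
definition normalized_1_unconditional_norm :: "(complex ^ 'n \<Rightarrow> real) \<Rightarrow> bool" where
  "normalized_1_unconditional_norm N \<longleftrightarrow>
     (\<forall>z. N z = 0 \<longleftrightarrow> z = 0) \<and>
     (\<forall>c z. N (c *s z) = cmod c * N z) \<and>
     (\<forall>z w. N (z + w) \<le> N z + N w) \<and>
     (\<forall>i. N (axis i 1) = 1) \<and>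
     (\<forall>\<epsilon> z. (\<forall>i. cmod (\<epsilon> i) = 1) \<longrightarrow> N (\<chi> i. \<epsilon> i * z $ i) = N z)"

definition open_unit_ball :: "(complex ^ 'n \<Rightarrow> real) \<Rightarrow> (complex ^ 'n) set" where
  "open_unit_ball N = {z. N z < 1}"

definition id_to_l1_norm :: "(complex ^ 'n \<Rightarrow> real) \<Rightarrow> real" where
  "id_to_l1_norm N = Sup {(\<Sum>i\<in>UNIV. cmod (z $ i)) | z. N z \<le> 1}"

end

theory Submission
  imports Defs "HOL-Library.FuncSet"
begin


section \<open>Complex scaling\<close>

lemma cs_add_right: "complex_scaling sc \<Longrightarrow> sc c (x + y) = sc c x + sc c y"
  unfolding complex_scaling_def by blast
lemma cs_add_left: "complex_scaling sc \<Longrightarrow> sc (c + d) x = sc c x + sc d x"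
  unfolding complex_scaling_def by blast
lemma cs_assoc: "complex_scaling sc \<Longrightarrow> sc c (sc d x) = sc (c * d) x"
  unfolding complex_scaling_def by blast
lemma cs_real: "complex_scaling sc \<Longrightarrow> sc (complex_of_real r) x = r *\<^sub>R x"
  unfolding complex_scaling_def by blast
lemma cs_norm: "complex_scaling sc \<Longrightarrow> norm (sc c x) = cmod c * norm x"
  unfolding complex_scaling_def by blast
lemma cs_one: "complex_scaling sc \<Longrightarrow> sc 1 x = x"
  using cs_real[of sc 1 x] by simp
lemma cs_zero_left: "complex_scaling sc \<Longrightarrow> sc 0 x = 0"
  using cs_real[of sc 0 x] by simp
lemma cs_zero_right: "complex_scaling sc \<Longrightarrow> sc c 0 = 0"
  using cs_norm[of sc c 0] by simp
lemma cs_sum_left: "complex_scaling sc \<Longrightarrow> sc (sum f A) x = (\<Sum>i\<in>A. sc (f i) x)"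
  by (induction A rule: infinite_finite_induct) (auto simp: cs_zero_left cs_add_left)

lemma monom_pow_1: "monom_pow (z :: 'a::comm_semiring_1 ^ 1) \<beta> = (z $ 1) ^ (\<beta> $ 1)"
  unfolding monom_pow_def by simp

lemma vec1_eq: "(\<beta> :: 'a ^ 1) = (\<chi> _. \<beta> $ 1)"
  by (simp add: vec_eq_iff)

lemma monom_pow_zero: "monom_pow (0 :: 'a::comm_semiring_1 ^ 'k) \<alpha> = (if \<alpha> = 0 then 1 else 0)"
proof (cases "\<alpha> = 0")
  case True thus ?thesis by (simp add: monom_pow_def)
next
  case False
  then obtain i where "\<alpha> $ i \<noteq> 0" by (auto simp: vec_eq_iff)
  then have "(0::'a) ^ (\<alpha> $ i) = 0" by (simp add: zero_power)
  then have "(\<Prod>j\<in>UNIV. ((0::'a^'k) $ j) ^ (\<alpha> $ j)) = 0"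
    by (intro prod_zero) (auto intro!: bexI[of _ j])
  then show ?thesis using False unfolding monom_pow_def by simp
qed

lemma monom_pow_single:
  "monom_pow (\<chi> i. if i = i0 then s else (0::'a::comm_semiring_1)) \<alpha>
     = (if (\<forall>i. i \<noteq> i0 \<longrightarrow> \<alpha> $ i = 0) then s ^ (\<alpha> $ i0) else 0)"
proof (cases "\<forall>i. i \<noteq> i0 \<longrightarrow> \<alpha> $ i = 0")
  case True
  have "monom_pow (\<chi> i. if i = i0 then s else (0::'a)) \<alpha> = (\<Prod>i\<in>UNIV. if i = i0 then s ^ (\<alpha> $ i0) else 1)"
    unfolding monom_pow_def by (intro prod.cong) (use True in auto)
  also have "\<dots> = s ^ (\<alpha> $ i0)" by (simp add: prod.delta)
  finally show ?thesis using True by simp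
next
  case False
  then obtain j where j: "j \<noteq> i0" "\<alpha> $ j \<noteq> 0" by auto
  have "((\<chi> i. if i = i0 then s else (0::'a)) $ j) ^ (\<alpha> $ j) = 0" using j by (simp add: zero_power)
  then have "(\<Prod>i\<in>UNIV. ((\<chi> i. if i = i0 then s else (0::'a)) $ i) ^ (\<alpha> $ i)) = 0"
    by (intro prod_zero) (auto intro!: bexI[of _ j] simp del: vec_lambda_beta)
  then show ?thesis using False unfolding monom_pow_def by auto
qed

lemma monom_pow_norm: "norm (monom_pow (z :: 'a::{real_normed_field} ^ 'k) \<alpha>) = monom_pow (\<chi> i. norm (z $ i)) \<alpha>"
  unfolding monom_pow_def by (simp add: prod_norm[symmetric] norm_power)

lemma monom_pow_nonneg: "(\<And>i. 0 \<le> r $ i) \<Longrightarrow> 0 \<le> monom_pow (r :: real ^ 'k) \<alpha>"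
  unfolding monom_pow_def by (simp add: prod_nonneg)

lemma power_powr_nonneg: "(0::real) \<le> x \<Longrightarrow> (x ^ k) powr p = (x powr p) ^ k"
proof (cases "x = 0")
  case True thus ?thesis by (cases k) auto
next
  case False
  assume "0 \<le> x"
  with False have "x > 0" by simp
  then show ?thesis
    by (simp add: powr_realpow[symmetric] powr_powr powr_power mult.commute)
qed

lemma monom_pow_powr: "(\<And>i. 0 \<le> r $ i) \<Longrightarrow>
   (monom_pow (r :: real ^ 'k) \<alpha>) powr p = monom_pow (\<chi> i. r $ i powr p) \<alpha>"
  unfolding monom_pow_def prod_powr_distrib by (simp add: power_powr_nonneg)

lemma monom_pow_mono: "(\<And>i. 0 \<le> r $ i) \<Longrightarrow> (\<And>i. r $ i \<le> t $ i) \<Longrightarrow>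
   monom_pow (r :: real ^ 'k) \<alpha> \<le> monom_pow t \<alpha>"
  unfolding monom_pow_def by (intro prod_mono) (auto intro: power_mono)

section \<open>Multinomial expansion via words\<close>

definition words :: "nat \<Rightarrow> (nat \<Rightarrow> 'n) set" where
  "words m = PiE {..<m} (\<lambda>_. UNIV)"

definition cnt :: "nat \<Rightarrow> (nat \<Rightarrow> 'n::finite) \<Rightarrow> nat ^ 'n" where
  "cnt m \<phi> = (\<chi> i. card {j\<in>{..<m}. \<phi> j = i})"

definition lev :: "nat \<Rightarrow> (nat ^ 'n::finite) set" where
  "lev m = {\<alpha>. (\<Sum>i\<in>UNIV. \<alpha> $ i) = m}"

abbreviation deg :: "nat ^ 'n::finite \<Rightarrow> nat" where
  "deg \<alpha> \<equiv> (\<Sum>i\<in>UNIV. \<alpha> $ i)"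

definition mc :: "nat ^ 'n::finite \<Rightarrow> nat" where
  "mc \<alpha> = card {\<phi> \<in> words (deg \<alpha>). cnt (deg \<alpha>) \<phi> = \<alpha>}"

lemma finite_words: "finite (words m :: (nat \<Rightarrow> 'n::finite) set)"
  unfolding words_def by (rule finite_PiE) auto

lemma finite_lev: "finite (lev m :: (nat ^ 'n::finite) set)"
proof -
  have "lev m \<subseteq> vec_lambda ` (PiE (UNIV :: 'n set) (\<lambda>_. {..m}))"
  proof
    fix \<alpha> :: "nat ^ 'n" assume a: "\<alpha> \<in> lev m"
    have "\<alpha> $ i \<le> m" for i
    proof -
      have "\<alpha> $ i \<le> (\<Sum>j\<in>UNIV. \<alpha> $ j)" by (rule member_le_sum) auto
      then show ?thesis using a by (simp add: lev_def)
    qed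
    then have "(\<lambda>i. \<alpha> $ i) \<in> PiE (UNIV :: 'n set) (\<lambda>_. {..m})" by auto
    then show "\<alpha> \<in> vec_lambda ` (PiE (UNIV :: 'n set) (\<lambda>_. {..m}))"
      by (intro image_eqI[of _ _ "\<lambda>i. \<alpha> $ i"]) auto
  qed
  moreover have "finite (vec_lambda ` (PiE (UNIV :: 'n set) (\<lambda>_. {..m})))"
    by (intro finite_imageI finite_PiE) auto
  ultimately show ?thesis by (rule finite_subset)
qed

lemma cnt_lev: "cnt m \<phi> \<in> lev m"
proof -
  have "(\<Sum>i\<in>UNIV. card {j\<in>{..<m}. \<phi> j = i}) = (\<Sum>i\<in>UNIV. \<Sum>j\<in>{x\<in>{..<m}. \<phi> x = i}. (1::nat))"
    by simp
  also have "\<dots> = (\<Sum>j\<in>{..<m}. (1::nat))"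
    by (rule sum.group) auto
  finally show ?thesis by (simp add: lev_def cnt_def)
qed

lemma multinomial:
  fixes z :: "'a::comm_semiring_1 ^ 'n::finite"
  shows "(\<Sum>i\<in>UNIV. z $ i) ^ m = (\<Sum>\<alpha>\<in>lev m. of_nat (mc \<alpha>) * monom_pow z \<alpha>)"
proof -
  have "(\<Sum>i\<in>UNIV. z $ i) ^ m = (\<Prod>j\<in>{..<m}. \<Sum>i\<in>UNIV. z $ i)" by simp
  also have "\<dots> = (\<Sum>\<phi>\<in>words m. \<Prod>j\<in>{..<m}. z $ \<phi> j)"
    unfolding words_def by (rule prod_sum_PiE) auto
  also have "\<dots> = (\<Sum>\<phi>\<in>words m. monom_pow z (cnt m \<phi>))"
  proof (rule sum.cong[OF refl])
    fix \<phi> :: "nat \<Rightarrow> 'n"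
    have "(\<Prod>j\<in>{..<m}. z $ \<phi> j) = (\<Prod>i\<in>UNIV. \<Prod>j\<in>{x\<in>{..<m}. \<phi> x = i}. z $ \<phi> j)"
      by (rule prod.group[symmetric]) auto
    also have "\<dots> = (\<Prod>i\<in>UNIV. \<Prod>j\<in>{x\<in>{..<m}. \<phi> x = i}. z $ i)"
      by (intro prod.cong) auto
    also have "\<dots> = monom_pow z (cnt m \<phi>)"
      by (simp add: monom_pow_def cnt_def)
    finally show "(\<Prod>j\<in>{..<m}. z $ \<phi> j) = monom_pow z (cnt m \<phi>)" .
  qed
  also have "\<dots> = (\<Sum>\<alpha>\<in>lev m. \<Sum>\<phi>\<in>{x\<in>words m. cnt m x = \<alpha>}. monom_pow z (cnt m \<phi>))"
    by (rule sum.group[symmetric]) (auto simp: finite_words finite_lev cnt_lev)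
  also have "\<dots> = (\<Sum>\<alpha>\<in>lev m. of_nat (mc \<alpha>) * monom_pow z \<alpha>)"
  proof (rule sum.cong[OF refl])
    fix \<alpha> :: "nat ^ 'n" assume "\<alpha> \<in> lev m"
    then have d: "deg \<alpha> = m" by (simp add: lev_def)
    have "(\<Sum>\<phi>\<in>{x\<in>words m. cnt m x = \<alpha>}. monom_pow z (cnt m \<phi>)) = (\<Sum>\<phi>\<in>{x\<in>words m. cnt m x = \<alpha>}. monom_pow z \<alpha>)"
      by (intro sum.cong) auto
    also have "\<dots> = of_nat (mc \<alpha>) * monom_pow z \<alpha>"
      by (simp add: mc_def d)
    finally show "(\<Sum>\<phi>\<in>{x\<in>words m. cnt m x = \<alpha>}. monom_pow z (cnt m \<phi>)) = of_nat (mc \<alpha>) * monom_pow z \<alpha>" .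
  qed
  finally show ?thesis .
qed



context
  fixes N :: "complex ^ 'n \<Rightarrow> real"
  assumes NN: "normalized_1_unconditional_norm N"
begin

lemma N_scale: "N (c *s z) = cmod c * N z"
  using NN unfolding normalized_1_unconditional_norm_def by blast
lemma N_tri: "N (z + w) \<le> N z + N w"
  using NN unfolding normalized_1_unconditional_norm_def by blast
lemma N_axis: "N (axis i 1) = 1"
  using NN unfolding normalized_1_unconditional_norm_def by blast
lemma N_uncond: "(\<And>i. cmod (\<epsilon> i) = 1) \<Longrightarrow> N (\<chi> i. \<epsilon> i * z $ i) = N z"
  using NN unfolding normalized_1_unconditional_norm_def by blast

lemma N_zero: "N 0 = 0"
  using N_scale[of 0 0] by simp

lemma N_single: "N (\<chi> j. if j = i then w else 0) = cmod w"
proof -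
  have "(\<chi> j. if j = i then w else 0) = w *s axis i 1"
    by (simp add: vec_eq_iff axis_def)
  then show ?thesis by (simp add: N_scale N_axis)
qed

lemma N_coord: "cmod (z $ i) \<le> N z"
proof -
  define \<epsilon> where "\<epsilon> j = (if j = i then 1 else - 1 :: complex)" for j
  have e: "cmod (\<epsilon> j) = 1" for j by (simp add: \<epsilon>_def)
  have "z + (\<chi> j. \<epsilon> j * z $ j) = (\<chi> j. if j = i then 2 * z $ i else 0)"
    by (simp add: vec_eq_iff \<epsilon>_def)
  then have "N (\<chi> j. if j = i then 2 * z $ i else 0) \<le> N z + N z"
    using N_tri[of z "\<chi> j. \<epsilon> j * z $ j"] N_uncond[OF e] by simp
  then show ?thesis by (simp add: N_single norm_mult)
qed

lemma N_nonneg: "0 \<le> N z"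
  using N_coord[of z] norm_ge_zero order_trans by blast

lemma l1_le: "(\<Sum>i\<in>UNIV. cmod (z $ i)) \<le> real CARD('n) * N z"
proof -
  have "(\<Sum>i\<in>UNIV. cmod (z $ i)) \<le> (\<Sum>i\<in>(UNIV::'n set). N z)"
    by (intro sum_mono N_coord)
  then show ?thesis by simp
qed

lemma C_bdd: "bdd_above {(\<Sum>i\<in>UNIV. cmod (z $ i)) | z. N z \<le> 1}"
proof (rule bdd_aboveI[of _ "real CARD('n)"])
  fix x assume "x \<in> {(\<Sum>i\<in>UNIV. cmod (z $ i)) | z. N z \<le> 1}"
  then obtain z where "x = (\<Sum>i\<in>UNIV. cmod (z $ i))" "N z \<le> 1" by blast
  then show "x \<le> real CARD('n)"
  proof -
    have "real CARD('n) * N z \<le> real CARD('n) * 1"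
      using \<open>N z \<le> 1\<close> by (intro mult_left_mono) auto
    then show ?thesis using l1_le[of z] \<open>x = _\<close> by linarith
  qed
qed

lemma C_ge1: "1 \<le> id_to_l1_norm N"
proof -
  fix i0 :: 'n
  have "(\<Sum>i\<in>UNIV. cmod (axis i0 (1::complex) $ i)) = (\<Sum>i\<in>UNIV. if i = i0 then (1::real) else 0)"
    by (intro sum.cong) (auto simp: axis_def)
  then have "(\<Sum>i\<in>UNIV. cmod (axis i0 (1::complex) $ i)) = 1" by simp
  moreover have "N (axis i0 1) \<le> 1" by (simp add: N_axis)
  ultimately have "1 \<in> {(\<Sum>i\<in>UNIV. cmod (z $ i)) | z. N z \<le> 1}" by force
  then show ?thesis unfolding id_to_l1_norm_def by (rule cSup_upper[OF _ C_bdd])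
qed

lemma l1_le_C: "(\<Sum>i\<in>UNIV. cmod (z $ i)) \<le> id_to_l1_norm N * N z"
proof (cases "N z = 0")
  case True
  then have "z = 0" using NN unfolding normalized_1_unconditional_norm_def by blast
  then show ?thesis by (simp add: N_zero)
next
  case False
  then have pos: "N z > 0" using N_nonneg[of z] by simp
  define z' where "z' = complex_of_real (1 / N z) *s z"
  have "N z' = 1" using pos by (simp add: z'_def N_scale norm_divide)
  then have "(\<Sum>i\<in>UNIV. cmod (z' $ i)) \<in> {(\<Sum>i\<in>UNIV. cmod (z $ i)) | z. N z \<le> 1}" by force
  then have "(\<Sum>i\<in>UNIV. cmod (z' $ i)) \<le> id_to_l1_norm N"
    unfolding id_to_l1_norm_def by (rule cSup_upper[OF _ C_bdd])
  moreover have "(\<Sum>i\<in>UNIV. cmod (z' $ i)) = (\<Sum>i\<in>UNIV. cmod (z $ i)) / N z"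
    using pos by (simp add: z'_def norm_mult norm_divide sum_divide_distrib)
  ultimately show ?thesis using pos by (simp add: divide_le_eq mult.commute)
qed

lemma ball_zero: "0 \<in> open_unit_ball N"
  by (simp add: open_unit_ball_def N_zero)

end

lemma disc_zero: "0 \<in> unit_disc1"
  by (simp add: unit_disc1_def)



section \<open>Basic facts on bounded holomorphic series\<close>

lemma bhol_zero:
  assumes cs: "complex_scaling scX" and bh: "bhol_series scX \<Omega> f a" and z0: "0 \<in> \<Omega>"
  shows "f 0 = a 0"
proof -
  have h: "((\<lambda>\<alpha>. scX (monom_pow 0 \<alpha>) (a \<alpha>)) has_sum f 0) UNIV"
    using bh z0 unfolding bhol_series_def by blast
  have "((\<lambda>\<alpha>. scX (monom_pow 0 \<alpha>) (a \<alpha>)) has_sum a 0) UNIV"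
    by (rule has_sum_finite_neutralI[of "{0}"])
       (auto simp: monom_pow_zero cs_one[OF cs] cs_zero_left[OF cs])
  then show ?thesis using h has_sum_unique by blast
qed

lemma bhol_bdd:
  assumes bh: "bhol_series scX \<Omega> f a"
  shows "bdd_above ((\<lambda>z. norm (f z)) ` \<Omega>)"
proof -
  from bh have "bounded (f ` \<Omega>)" unfolding bhol_series_def by blast
  then obtain B where "\<forall>x\<in>f ` \<Omega>. norm x \<le> B" by (auto simp: bounded_iff)
  then show ?thesis by (intro bdd_aboveI[of _ B]) auto
qed

lemma supnorm_upper:
  assumes bh: "bhol_series scX \<Omega> f a" and "z \<in> \<Omega>"
  shows "norm (f z) \<le> supnorm \<Omega> f"
  unfolding supnorm_def using bhol_bdd[OF bh] assms(2) by (intro cSUP_upper) auto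

lemma supnorm_nonneg:
  assumes bh: "bhol_series scX \<Omega> f a" and "z \<in> \<Omega>"
  shows "0 \<le> supnorm \<Omega> f"
  using supnorm_upper[OF assms] norm_ge_zero order_trans by blast

lemma monomial_bhol:
  assumes cs: "complex_scaling scX"
    and le1: "\<And>z. z \<in> \<Omega> \<Longrightarrow> cmod (monom_pow z \<alpha>0) \<le> 1" and ne: "\<Omega> \<noteq> {}"
  shows "bhol_series scX \<Omega> (\<lambda>z. scX (monom_pow z \<alpha>0) x) (\<lambda>\<alpha>. if \<alpha> = \<alpha>0 then x else 0)"
    and "supnorm \<Omega> (\<lambda>z. scX (monom_pow z \<alpha>0) x) \<le> norm x"
proof -
  have nb: "norm (scX (monom_pow z \<alpha>0) x) \<le> norm x" if "z \<in> \<Omega>" for z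
    using le1[OF that] by (simp add: cs_norm[OF cs] mult_left_le_one_le)
  show "bhol_series scX \<Omega> (\<lambda>z. scX (monom_pow z \<alpha>0) x) (\<lambda>\<alpha>. if \<alpha> = \<alpha>0 then x else 0)"
    unfolding bhol_series_def
  proof (intro conjI ballI)
    fix z assume "z \<in> \<Omega>"
    show "((\<lambda>\<alpha>. scX (monom_pow z \<alpha>) (if \<alpha> = \<alpha>0 then x else 0)) has_sum scX (monom_pow z \<alpha>0) x) UNIV"
      by (rule has_sum_finite_neutralI[of "{\<alpha>0}"]) (auto simp: cs_zero_right[OF cs])
  next
    show "bounded ((\<lambda>z. scX (monom_pow z \<alpha>0) x) ` \<Omega>)"
      unfolding bounded_iff using nb by blast
  qed
  show "supnorm \<Omega> (\<lambda>z. scX (monom_pow z \<alpha>0) x) \<le> norm x"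
    unfolding supnorm_def using ne nb by (intro cSUP_least) auto
qed

lemma disc_series:
  assumes cs: "complex_scaling scX" and bh: "bhol_series scX unit_disc1 g b"
    and w: "cmod w < 1"
  shows "((\<lambda>m. scX (w ^ m) (b (\<chi> _. m))) has_sum g (\<chi> _. w)) UNIV"
proof -
  have "(\<chi> _. w) \<in> unit_disc1" using w by (simp add: unit_disc1_def)
  then have h: "((\<lambda>\<beta>. scX (monom_pow (\<chi> _. w) \<beta>) (b \<beta>)) has_sum g (\<chi> _. w)) UNIV"
    using bh unfolding bhol_series_def by blast
  have inj: "inj (\<lambda>m::nat. (\<chi> _::1. m))"
    by (auto simp: inj_def vec_eq_iff)
  have r: "range (\<lambda>m::nat. (\<chi> _::1. m)) = UNIV"
  proof -
    have "\<beta> \<in> range (\<lambda>m::nat. (\<chi> _::1. m))" for \<beta> :: "nat ^ 1"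
      by (rule image_eqI[of _ _ "\<beta> $ 1"]) (simp_all add: vec_eq_iff)
    then show ?thesis by blast
  qed
  from h have "((\<lambda>\<beta>. scX (monom_pow (\<chi> _. w) \<beta>) (b \<beta>)) has_sum g (\<chi> _. w)) (range (\<lambda>m::nat. (\<chi> _::1. m)))"
    by (simp add: r)
  then have "(((\<lambda>\<beta>. scX (monom_pow (\<chi> _. w) \<beta>) (b \<beta>)) \<circ> (\<lambda>m::nat. (\<chi> _::1. m))) has_sum g (\<chi> _. w)) UNIV"
    using has_sum_reindex[OF inj] by blast
  then show ?thesis by (simp add: o_def monom_pow_1)
qed

lemma disc_coeff_bound:
  assumes cs: "complex_scaling scX" and bh: "bhol_series scX unit_disc1 g b"
    and r: "0 \<le> \<rho>" "\<rho> < 1"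
  shows "\<exists>B. \<forall>m. norm (b (\<chi> _. m)) * \<rho> ^ m \<le> B"
proof -
  have "((\<lambda>m. scX (complex_of_real \<rho> ^ m) (b (\<chi> _. m))) has_sum g (\<chi> _. complex_of_real \<rho>)) UNIV"
    using r by (intro disc_series[OF cs bh]) auto
  then have "summable (\<lambda>m. scX (complex_of_real \<rho> ^ m) (b (\<chi> _. m)))"
    using has_sum_imp_sums sums_summable by blast
  then have "(\<lambda>m. scX (complex_of_real \<rho> ^ m) (b (\<chi> _. m))) \<longlonglongrightarrow> 0"
    by (rule summable_LIMSEQ_zero)
  then have "Bseq (\<lambda>m. scX (complex_of_real \<rho> ^ m) (b (\<chi> _. m)))"
    by (intro convergent_imp_Bseq) (auto simp: convergent_def)
  then obtain K where "\<forall>m. norm (scX (complex_of_real \<rho> ^ m) (b (\<chi> _. m))) \<le> K"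
    by (auto elim: BseqE)
  then have "\<forall>m. norm (b (\<chi> _. m)) * \<rho> ^ m \<le> K"
    using r by (simp add: cs_norm[OF cs] norm_power mult.commute)
  then show ?thesis by blast
qed



lemma compose_bhol:
  fixes scX :: "complex \<Rightarrow> 'x::banach \<Rightarrow> 'x" and N :: "complex ^ 'n \<Rightarrow> real"
    and g :: "complex ^ 1 \<Rightarrow> 'x" and b :: "nat ^ 1 \<Rightarrow> 'x"
  assumes cs: "complex_scaling scX" and bh: "bhol_series scX unit_disc1 g b"
    and NN: "normalized_1_unconditional_norm N"
  defines "C \<equiv> id_to_l1_norm N"
  shows "bhol_series scX (open_unit_ball N)
           (\<lambda>z. g (\<chi> _. (\<Sum>i\<in>UNIV. z $ i) / complex_of_real C))
           (\<lambda>\<alpha>. scX (complex_of_real (real (mc \<alpha>) / C ^ deg \<alpha>)) (b (\<chi> _. deg \<alpha>)))"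
    and "supnorm (open_unit_ball N) (\<lambda>z. g (\<chi> _. (\<Sum>i\<in>UNIV. z $ i) / complex_of_real C)) \<le> supnorm unit_disc1 g"
proof -
  define a where "a \<alpha> = scX (complex_of_real (real (mc \<alpha>) / C ^ deg \<alpha>)) (b (\<chi> _. deg \<alpha>))" for \<alpha> :: "nat ^ 'n"
  define F where "F z = g (\<chi> _. (\<Sum>i\<in>UNIV. z $ i) / complex_of_real C)" for z :: "complex ^ 'n"
  have C1: "1 \<le> C" using C_ge1[OF NN] by (simp add: C_def)
  have inD: "(\<chi> _. (\<Sum>i\<in>UNIV. z $ i) / complex_of_real C) \<in> unit_disc1" if "z \<in> open_unit_ball N" for z
  proof -
    have "cmod ((\<Sum>i\<in>UNIV. z $ i) / complex_of_real C) = cmod (\<Sum>i\<in>UNIV. z $ i) / C"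
      using C1 by (simp add: norm_divide)
    also have "\<dots> \<le> (\<Sum>i\<in>UNIV. cmod (z $ i)) / C"
      using C1 by (intro divide_right_mono norm_sum) auto
    also have "\<dots> \<le> N z"
      using l1_le_C[OF NN, of z] C1 by (simp add: C_def divide_le_eq mult.commute)
    also have "\<dots> < 1" using that by (simp add: open_unit_ball_def)
    finally show ?thesis by (simp add: unit_disc1_def)
  qed
  have hs: "((\<lambda>\<alpha>. scX (monom_pow z \<alpha>) (a \<alpha>)) has_sum F z) UNIV" if zB: "z \<in> open_unit_ball N" for z
  proof -
    define q where "q = (\<Sum>i\<in>UNIV. cmod (z $ i)) / C"
    define w where "w = (\<Sum>i\<in>UNIV. z $ i) / complex_of_real C"
    have q0: "0 \<le> q" using C1 by (simp add: q_def sum_nonneg)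
    have q1: "q < 1"
    proof -
      have "q \<le> N z" using l1_le_C[OF NN, of z] C1 by (simp add: q_def C_def divide_le_eq mult.commute)
      also have "\<dots> < 1" using zB by (simp add: open_unit_ball_def)
      finally show ?thesis .
    qed
    define \<rho> where "\<rho> = (1 + q) / 2"
    have r0: "0 < \<rho>" "\<rho> < 1" "q < \<rho>" using q0 q1 by (auto simp: \<rho>_def)
    obtain B where B: "\<And>m. norm (b (\<chi> _. m)) * \<rho> ^ m \<le> B"
      using disc_coeff_bound[OF cs bh, of \<rho>] r0 by auto
    define T where "T \<alpha> = scX (monom_pow z \<alpha>) (a \<alpha>)" for \<alpha>
    have Tn: "norm (T \<alpha>) = (real (mc \<alpha>) * monom_pow (\<chi> i. cmod (z $ i)) \<alpha>) * (norm (b (\<chi> _. deg \<alpha>)) / C ^ deg \<alpha>)" for \<alpha>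
      using C1 by (simp add: T_def a_def cs_norm[OF cs] monom_pow_norm norm_divide norm_power)
    have levsum: "(\<Sum>\<alpha>\<in>lev m. norm (T \<alpha>)) = q ^ m * norm (b (\<chi> _. m))" for m
    proof -
      have "(\<Sum>\<alpha>\<in>lev m. norm (T \<alpha>)) = (\<Sum>\<alpha>\<in>lev m. (real (mc \<alpha>) * monom_pow (\<chi> i. cmod (z $ i)) \<alpha>) * (norm (b (\<chi> _. m)) / C ^ m))"
        by (intro sum.cong) (auto simp: Tn lev_def)
      also have "\<dots> = (\<Sum>\<alpha>\<in>lev m. real (mc \<alpha>) * monom_pow (\<chi> i. cmod (z $ i)) \<alpha>) * (norm (b (\<chi> _. m)) / C ^ m)"
        by (rule sum_distrib_right[symmetric])
      also have "\<dots> = (\<Sum>i\<in>UNIV. cmod (z $ i)) ^ m * (norm (b (\<chi> _. m)) / C ^ m)"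
        using multinomial[of "\<chi> i. cmod (z $ i)" m] by simp
      also have "\<dots> = q ^ m * norm (b (\<chi> _. m))"
        by (simp add: q_def power_divide)
      finally show ?thesis .
    qed
    have B0: "0 \<le> B" using order_trans[OF norm_ge_zero, of "b (\<chi> _. 0)" B] B[of 0] by simp
    have summ_q: "summable (\<lambda>m. q ^ m * norm (b (\<chi> _. m)))"
    proof (rule summable_comparison_test)
      show "\<exists>N0. \<forall>n\<ge>N0. norm (q ^ n * norm (b (\<chi> _. n))) \<le> B * (q / \<rho>) ^ n"
      proof (intro exI allI impI)
        fix n :: nat
        have "q ^ n * norm (b (\<chi> _. n)) = (q / \<rho>) ^ n * (norm (b (\<chi> _. n)) * \<rho> ^ n)"
          using r0 by (simp add: power_divide)
        also have "\<dots> \<le> (q / \<rho>) ^ n * B"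
          using B[of n] q0 r0 by (intro mult_left_mono) auto
        finally show "norm (q ^ n * norm (b (\<chi> _. n))) \<le> B * (q / \<rho>) ^ n"
          using q0 by (simp add: mult.commute)
      qed
      show "summable (\<lambda>n. B * (q / \<rho>) ^ n)"
        using r0 q0 by (intro summable_mult summable_geometric) auto
    qed
    have absT: "(\<lambda>\<alpha>. norm (T \<alpha>)) summable_on UNIV"
    proof (rule nonneg_bdd_above_summable_on)
      show "bdd_above (sum (\<lambda>\<alpha>. norm (T \<alpha>)) ` {F. F \<subseteq> UNIV \<and> finite F})"
      proof (rule bdd_aboveI2)
        fix F :: "(nat ^ 'n) set" assume "F \<in> {F. F \<subseteq> UNIV \<and> finite F}"
        then have fF: "finite F" by simp
        have "sum (\<lambda>\<alpha>. norm (T \<alpha>)) F = (\<Sum>m\<in>(\<lambda>\<alpha>. deg \<alpha>) ` F. \<Sum>\<alpha>\<in>{x\<in>F. deg x = m}. norm (T \<alpha>))"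
          by (rule sum.group[symmetric]) (use fF in auto)
        also have "\<dots> \<le> (\<Sum>m\<in>(\<lambda>\<alpha>. deg \<alpha>) ` F. \<Sum>\<alpha>\<in>lev m. norm (T \<alpha>))"
          by (intro sum_mono sum_mono2 finite_lev) (auto simp: lev_def)
        also have "\<dots> = (\<Sum>m\<in>(\<lambda>\<alpha>. deg \<alpha>) ` F. q ^ m * norm (b (\<chi> _. m)))"
          by (simp add: levsum)
        also have "\<dots> \<le> (\<Sum>m. q ^ m * norm (b (\<chi> _. m)))"
          by (rule sum_le_suminf[OF summ_q]) (simp_all add: fF q0)
        finally show "sum (\<lambda>\<alpha>. norm (T \<alpha>)) F \<le> (\<Sum>m. q ^ m * norm (b (\<chi> _. m)))" .
      qed
    qed auto
    have summT: "T summable_on UNIV"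
      by (rule abs_summable_summable[OF absT])
    have bij: "bij_betw snd (SIGMA m:UNIV. lev m) (UNIV :: (nat ^ 'n) set)"
      by (rule bij_betwI[where g="\<lambda>\<alpha>. (deg \<alpha>, \<alpha>)"]) (auto simp: lev_def)
    have sumS: "(\<lambda>(m, \<alpha>). T \<alpha>) summable_on (SIGMA m:UNIV. lev m)"
      using summable_on_reindex_bij_betw[OF bij, of T] summT by (simp add: case_prod_unfold)
    have inner: "infsum T (lev m) = scX (w ^ m) (b (\<chi> _. m))" for m
    proof -
      have "infsum T (lev m) = (\<Sum>\<alpha>\<in>lev m. T \<alpha>)" by (simp add: finite_lev)
      also have "\<dots> = (\<Sum>\<alpha>\<in>lev m. scX (monom_pow z \<alpha> * complex_of_real (real (mc \<alpha>) / C ^ m)) (b (\<chi> _. m)))"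
        by (intro sum.cong) (auto simp: T_def a_def cs_assoc[OF cs] lev_def)
      also have "\<dots> = scX (\<Sum>\<alpha>\<in>lev m. monom_pow z \<alpha> * complex_of_real (real (mc \<alpha>) / C ^ m)) (b (\<chi> _. m))"
        by (simp add: cs_sum_left[OF cs])
      also have "(\<Sum>\<alpha>\<in>lev m. monom_pow z \<alpha> * complex_of_real (real (mc \<alpha>) / C ^ m))
                 = (\<Sum>\<alpha>\<in>lev m. of_nat (mc \<alpha>) * monom_pow z \<alpha>) / complex_of_real C ^ m"
        by (simp add: sum_divide_distrib mult.commute)
      also have "\<dots> = w ^ m"
        by (simp add: multinomial[symmetric] w_def power_divide)
      finally show ?thesis .
    qed
    have "infsum T UNIV = infsum (\<lambda>x. T (snd x)) (SIGMA m:UNIV. lev m)"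
      using infsum_reindex_bij_betw[OF bij, of T] by simp
    also have "\<dots> = infsum (\<lambda>(m, \<alpha>). T \<alpha>) (SIGMA m:UNIV. lev m)"
      by (simp add: case_prod_unfold)
    also have "\<dots> = infsum (\<lambda>m. infsum T (lev m)) UNIV"
      using infsum_Sigma'_banach[of "\<lambda>m \<alpha>. T \<alpha>" UNIV lev] sumS by simp
    also have "\<dots> = infsum (\<lambda>m. scX (w ^ m) (b (\<chi> _. m))) UNIV"
      by (simp add: inner)
    also have "\<dots> = F z"
    proof -
      have "cmod w < 1" using inD[OF zB] by (simp add: unit_disc1_def w_def)
      then have "((\<lambda>m. scX (w ^ m) (b (\<chi> _. m))) has_sum g (\<chi> _. w)) UNIV"
        by (rule disc_series[OF cs bh])
      then show ?thesis by (simp add: infsumI F_def w_def)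
    qed
    finally have "infsum T UNIV = F z" .
    then show ?thesis using summT unfolding has_sum_iff T_def[abs_def] by simp
  qed
  have bdd: "bounded (F ` open_unit_ball N)"
  proof -
    have "bounded (g ` unit_disc1)" using bh by (simp add: bhol_series_def)
    moreover have "F ` open_unit_ball N \<subseteq> g ` unit_disc1"
      using inD by (auto simp: F_def)
    ultimately show ?thesis by (rule bounded_subset)
  qed
  show "bhol_series scX (open_unit_ball N)
           (\<lambda>z. g (\<chi> _. (\<Sum>i\<in>UNIV. z $ i) / complex_of_real C))
           (\<lambda>\<alpha>. scX (complex_of_real (real (mc \<alpha>) / C ^ deg \<alpha>)) (b (\<chi> _. deg \<alpha>)))"
    using hs bdd unfolding bhol_series_def F_def a_def by blast
  show "supnorm (open_unit_ball N) (\<lambda>z. g (\<chi> _. (\<Sum>i\<in>UNIV. z $ i) / complex_of_real C)) \<le> supnorm unit_disc1 g"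
    unfolding supnorm_def[of "open_unit_ball N"]
  proof (rule cSUP_least)
    show "open_unit_ball N \<noteq> {}" using ball_zero[OF NN] by blast
    fix z assume "z \<in> open_unit_ball N"
    then show "norm (g (\<chi> _. (\<Sum>i\<in>UNIV. z $ i) / complex_of_real C)) \<le> supnorm unit_disc1 g"
      using inD by (intro supnorm_upper[OF bh]) auto
  qed
qed



lemma power_mean_powr:
  fixes r :: "'n::finite \<Rightarrow> real"
  assumes r: "\<And>i. 0 \<le> r i" and p: "1 \<le> p"
  shows "(\<Sum>i\<in>UNIV. r i) powr p \<le> real CARD('n) powr (p - 1) * (\<Sum>i\<in>UNIV. r i powr p)"
proof -
  define S where "S = {i. 0 < r i}"
  have sS: "(\<Sum>i\<in>UNIV. r i) = (\<Sum>i\<in>S. r i)"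
    by (rule sum.mono_neutral_right) (use r in \<open>auto simp: S_def less_le\<close>)
  show ?thesis
  proof (cases "S = {}")
    case True
    then have "(\<Sum>i\<in>UNIV. r i) = 0" using sS by simp
    then show ?thesis by (simp add: sum_nonneg)
  next
    case False
    define k where "k = real (card S)"
    have k0: "0 < k" unfolding k_def using False card_gt_0_iff[of S] finite by (metis of_nat_0_less_iff)
    have kn: "k \<le> real CARD('n)" by (simp add: k_def card_mono)
    have "(\<Sum>i\<in>S. (1 / k) *\<^sub>R r i) powr p \<le> (\<Sum>i\<in>S. (1 / k) * r i powr p)"
    proof -
      have fS: "finite S" by simp
      have sum1: "(\<Sum>i\<in>S. 1 / k) = 1" using k0 False by (simp add: k_def)
      have pos: "\<And>i. i \<in> S \<Longrightarrow> r i \<in> {0<..}" by (simp add: S_def)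
      show ?thesis
        by (rule convex_on_sum[OF fS False powr_convex[OF p] sum1]) (use k0 pos in auto)
    qed
    then have "((\<Sum>i\<in>S. r i) / k) powr p \<le> (\<Sum>i\<in>S. r i powr p) / k"
      by (simp add: sum_distrib_left[symmetric] sum_divide_distrib[symmetric])
    also have "\<dots> \<le> (\<Sum>i\<in>UNIV. r i powr p) / k"
      using k0 by (intro divide_right_mono sum_mono2) auto
    finally have A: "(\<Sum>i\<in>S. r i) powr p / k powr p \<le> (\<Sum>i\<in>UNIV. r i powr p) / k"
      using k0 by (simp add: powr_divide sum_nonneg r)
    have "(\<Sum>i\<in>S. r i) powr p \<le> k powr p * ((\<Sum>i\<in>UNIV. r i powr p) / k)"
      using A k0 by (simp add: divide_le_eq mult.commute)
    also have "\<dots> = k powr (p - 1) * (\<Sum>i\<in>UNIV. r i powr p)"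
      using k0 by (simp add: powr_diff)
    also have "\<dots> \<le> real CARD('n) powr (p - 1) * (\<Sum>i\<in>UNIV. r i powr p)"
      using k0 kn p by (intro mult_right_mono powr_mono2) (auto simp: sum_nonneg)
    finally show ?thesis using sS by simp
  qed
qed

lemma powr_bound:
  fixes x lam S p :: real
  assumes "0 \<le> x" "x \<le> lam * S" "0 \<le> lam" "0 \<le> S" "0 \<le> p"
  shows "x powr p \<le> lam powr p * S powr p"
  using powr_mono2[OF assms(5,1,2)] assms by (simp add: powr_mult)

lemma monom_pow_axis: "monom_pow z (\<chi> j. if j = i then m else 0) = (z $ i) ^ m"
proof -
  have "monom_pow z (\<chi> j. if j = i then m else 0) = (\<Prod>j\<in>UNIV. if j = i then (z $ i) ^ m else 1)"
    unfolding monom_pow_def by (intro prod.cong) auto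
  then show ?thesis by simp
qed

context
  fixes scX :: "complex \<Rightarrow> 'x::banach \<Rightarrow> 'x"
    and scY :: "complex \<Rightarrow> 'y::banach \<Rightarrow> 'y"
    and U :: "'x \<Rightarrow> 'y"
    and lam p :: real
    and N :: "complex ^ 'n \<Rightarrow> real"
  assumes csX: "complex_scaling scX" and csY: "complex_scaling scY"
    and lin: "bounded_linear U" and Uc: "\<forall>c x. U (scX c x) = scY c (U x)"
    and Unz: "U \<noteq> (\<lambda>x. 0)"
    and Ulam: "onorm U < lam"
    and p1: "1 \<le> p"
    and NN: "normalized_1_unconditional_norm N"
begin

lemma lam_pos: "0 < lam"
  using onorm_pos_le[OF lin] Ulam by linarith

lemma U0: "U 0 = 0"
  using lin by (simp add: linear_simps)

lemma U_zero_bound: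
  assumes bh: "bhol_series scX \<Omega> f a" and z0: "0 \<in> \<Omega>"
  shows "norm (U (a 0)) \<le> lam * supnorm \<Omega> f"
proof -
  have "norm (U (a 0)) \<le> onorm U * norm (a 0)" by (rule onorm[OF lin])
  also have "\<dots> \<le> lam * norm (a 0)" using Ulam by (intro mult_right_mono) auto
  also have "\<dots> \<le> lam * supnorm \<Omega> f"
    using bhol_zero[OF csX bh z0] supnorm_upper[OF bh z0] lam_pos by (intro mult_left_mono) auto
  finally show ?thesis .
qed

lemma KS_zero: "0 \<in> {r. r \<ge> 0 \<and>
     (\<forall>f a. bhol_series scX unit_disc1 f a \<longrightarrow>
        (\<forall>z\<in>(\<lambda>w. r *\<^sub>R w) ` unit_disc1. \<forall>F. finite F \<longrightarrow>
           (\<Sum>\<alpha>\<in>F. norm (scY (monom_pow z \<alpha>) (U (a \<alpha>))) powr p)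
             \<le> lam powr p * supnorm unit_disc1 f powr p))}"
proof (clarsimp)
  fix f a and w :: "complex ^ 1" and F :: "(nat ^ 1) set"
  assume bh: "bhol_series scX unit_disc1 f a" and "finite F"
  have "(\<Sum>\<alpha>\<in>F. norm (scY (monom_pow 0 \<alpha>) (U (a \<alpha>))) powr p) = (\<Sum>\<alpha>\<in>F. if \<alpha> = 0 then norm (U (a 0)) powr p else 0)"
    using p1 by (intro sum.cong) (auto simp: monom_pow_zero cs_one[OF csY] cs_zero_left[OF csY])
  also have "\<dots> \<le> norm (U (a 0)) powr p"
    using \<open>finite F\<close> by (simp add: sum.delta)
  also have "\<dots> \<le> lam powr p * supnorm unit_disc1 f powr p"
    using U_zero_bound[OF bh disc_zero] lam_pos supnorm_nonneg[OF bh disc_zero] p1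
    by (intro powr_bound) auto
  finally show "(\<Sum>\<alpha>\<in>F. norm (scY (monom_pow 0 \<alpha>) (U (a \<alpha>))) powr p) \<le> lam powr p * supnorm unit_disc1 f powr p" .
qed

definition Aok :: "real ^ 'n \<Rightarrow> bool" where
  "Aok r \<longleftrightarrow> (\<forall>i. r $ i \<ge> 0) \<and>
     (\<forall>f a. bhol_series scX (open_unit_ball N) f a \<longrightarrow>
        (\<forall>F. finite F \<longrightarrow>
           (\<Sum>\<alpha>\<in>F. norm (U (a \<alpha>)) powr p * (monom_pow r \<alpha>) powr p)
             \<le> lam powr p * supnorm (open_unit_ball N) f powr p))"

lemma A_eq: "A_const scX U lam p (open_unit_ball N) = Sup {(\<Sum>i\<in>UNIV. r $ i) / real CARD('n) | r. Aok r}"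
  unfolding A_const_def Aok_def by simp

lemma Aok_zero: "Aok 0"
  unfolding Aok_def
proof (intro conjI allI impI)
  fix f a and F :: "(nat ^ 'n) set"
  assume bh: "bhol_series scX (open_unit_ball N) f a" and "finite F"
  have "(\<Sum>\<alpha>\<in>F. norm (U (a \<alpha>)) powr p * (monom_pow (0::real^'n) \<alpha>) powr p) = (\<Sum>\<alpha>\<in>F. if \<alpha> = 0 then norm (U (a 0)) powr p else 0)"
    using p1 by (intro sum.cong) (auto simp: monom_pow_zero)
  also have "\<dots> \<le> norm (U (a 0)) powr p"
    using \<open>finite F\<close> by (simp add: sum.delta)
  also have "\<dots> \<le> lam powr p * supnorm (open_unit_ball N) f powr p"
    using U_zero_bound[OF bh ball_zero[OF NN]] lam_pos supnorm_nonneg[OF bh ball_zero[OF NN]] p1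
    by (intro powr_bound) auto
  finally show "(\<Sum>\<alpha>\<in>F. norm (U (a \<alpha>)) powr p * (monom_pow (0::real^'n) \<alpha>) powr p) \<le> lam powr p * supnorm (open_unit_ball N) f powr p" .
qed auto

lemma exists_Ux: "\<exists>x. U x \<noteq> 0"
  using Unz by auto

lemma arch_contra:
  assumes q: "1 < q" and ux: "U x \<noteq> 0"
    and H: "\<And>m. q ^ m * norm (U x) \<le> lam * norm x"
  shows False
proof -
  obtain m where "lam * norm x / norm (U x) < q ^ m" using real_arch_pow[OF q] by blast
  then have "lam * norm x < q ^ m * norm (U x)" using ux by (simp add: divide_less_eq)
  then show False using H[of m] by simp
qed

lemma powr_cancel:
  fixes x y :: real
  assumes "x powr p \<le> y powr p" "0 \<le> x" "0 \<le> y"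
  shows "x \<le> y"
proof (rule ccontr)
  assume "\<not> x \<le> y"
  then have "y powr p < x powr p" using p1 assms by (intro powr_less_mono2) auto
  then show False using assms by simp
qed

lemma KS_le1:
  assumes "\<rho> \<in> {r. r \<ge> 0 \<and>
     (\<forall>f a. bhol_series scX unit_disc1 f a \<longrightarrow>
        (\<forall>z\<in>(\<lambda>w. r *\<^sub>R w) ` unit_disc1. \<forall>F. finite F \<longrightarrow>
           (\<Sum>\<alpha>\<in>F. norm (scY (monom_pow z \<alpha>) (U (a \<alpha>))) powr p)
             \<le> lam powr p * supnorm unit_disc1 f powr p))}"
  shows "\<rho> \<le> 1"
proof (rule ccontr)
  assume "\<not> \<rho> \<le> 1"
  then have r1: "1 < \<rho>" by simp
  have K0: "\<forall>f a. bhol_series scX unit_disc1 f a \<longrightarrow>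
        (\<forall>z\<in>(\<lambda>w. \<rho> *\<^sub>R w) ` unit_disc1. \<forall>F. finite F \<longrightarrow>
           (\<Sum>\<alpha>\<in>F. norm (scY (monom_pow z \<alpha>) (U (a \<alpha>))) powr p)
             \<le> lam powr p * supnorm unit_disc1 f powr p)"
    using assms unfolding mem_Collect_eq by (rule conjunct2)
  note K = K0[rule_format]
  obtain x where ux: "U x \<noteq> 0" using exists_Ux by blast
  define q where "q = (1 + \<rho>) / 2"
  have q: "1 < q" "q < \<rho>" using r1 by (auto simp: q_def)
  show False
  proof (rule arch_contra[OF q(1) ux])
    fix m :: nat
    define \<alpha>0 where "\<alpha>0 = (\<chi> _::1. m)"
    have le1: "cmod (monom_pow w \<alpha>0) \<le> 1" if "w \<in> unit_disc1" for w
      using that by (simp add: \<alpha>0_def monom_pow_1 unit_disc1_def norm_power power_le_one)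
    have ne: "unit_disc1 \<noteq> {}" using disc_zero by blast
    note mb = monomial_bhol[OF csX le1 ne, of x]
    define w where "w = (\<chi> _::1. complex_of_real (q / \<rho>))"
    have wD: "w \<in> unit_disc1" using q r1 by (simp add: w_def unit_disc1_def norm_divide)
    have zq: "(\<rho> *\<^sub>R w) $ 1 = complex_of_real q"
    proof -
      have "(\<rho> *\<^sub>R w) $ 1 = \<rho> *\<^sub>R complex_of_real (q / \<rho>)" by (simp add: w_def)
      also have "\<dots> = complex_of_real (\<rho> * (q / \<rho>))" by (simp only: scaleR_conv_of_real of_real_mult)
      also have "\<rho> * (q / \<rho>) = q" using r1 by simp
      finally show ?thesis .
    qed
    have KK: "(\<Sum>\<alpha>\<in>{\<alpha>0}. norm (scY (monom_pow (\<rho> *\<^sub>R w) \<alpha>) (U (if \<alpha> = \<alpha>0 then x else 0))) powr p)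
             \<le> lam powr p * supnorm unit_disc1 (\<lambda>z. scX (monom_pow z \<alpha>0) x) powr p"
      using K[OF mb(1) imageI[OF wD], of "{\<alpha>0}"] by simp
    have "(q ^ m * norm (U x)) powr p \<le> lam powr p * supnorm unit_disc1 (\<lambda>z. scX (monom_pow z \<alpha>0) x) powr p"
    proof -
      have mz: "monom_pow (\<rho> *\<^sub>R w) \<alpha>0 = complex_of_real q ^ m"
        by (simp only: monom_pow_1 \<alpha>0_def zq vec_lambda_beta)
      show ?thesis using KK q by (simp add: mz cs_norm[OF csY] norm_power)
    qed
    also have "\<dots> \<le> lam powr p * norm x powr p"
      using mb(2) supnorm_nonneg[OF mb(1) disc_zero] p1 lam_pos
      by (intro mult_left_mono powr_mono2) auto
    also have "\<dots> = (lam * norm x) powr p" using lam_pos by (simp add: powr_mult)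
    finally have "(q ^ m * norm (U x)) powr p \<le> (lam * norm x) powr p" .
    then show "q ^ m * norm (U x) \<le> lam * norm x"
      by (rule powr_cancel) (use q lam_pos in auto)
  qed
qed

lemma Aok_le1:
  assumes "Aok r"
  shows "r $ i \<le> 1"
proof (rule ccontr)
  assume "\<not> r $ i \<le> 1"
  then have r1: "1 < r $ i" by simp
  have A0: "\<forall>f a. bhol_series scX (open_unit_ball N) f a \<longrightarrow>
        (\<forall>F. finite F \<longrightarrow>
           (\<Sum>\<alpha>\<in>F. norm (U (a \<alpha>)) powr p * (monom_pow r \<alpha>) powr p)
             \<le> lam powr p * supnorm (open_unit_ball N) f powr p)"
    using assms unfolding Aok_def by (rule conjunct2)
  note A = A0[rule_format]
  obtain x where ux: "U x \<noteq> 0" using exists_Ux by blast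
  show False
  proof (rule arch_contra[OF r1 ux])
    fix m :: nat
    define \<alpha>0 where "\<alpha>0 = (\<chi> j. if j = i then m else 0)"
    have le1: "cmod (monom_pow z \<alpha>0) \<le> 1" if "z \<in> open_unit_ball N" for z
    proof -
      have "cmod (z $ i) \<le> 1" using N_coord[OF NN, of z i] that by (simp add: open_unit_ball_def)
      then show ?thesis by (simp add: \<alpha>0_def monom_pow_axis norm_power power_le_one)
    qed
    have ne: "open_unit_ball N \<noteq> {}" using ball_zero[OF NN] by blast
    note mb = monomial_bhol[OF csX le1 ne, of x]
    have "(\<Sum>\<alpha>\<in>{\<alpha>0}. norm (U (if \<alpha> = \<alpha>0 then x else 0)) powr p * (monom_pow r \<alpha>) powr p)
             \<le> lam powr p * supnorm (open_unit_ball N) (\<lambda>z. scX (monom_pow z \<alpha>0) x) powr p"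
      using A[OF mb(1), of "{\<alpha>0}"] by simp
    then have "(r $ i ^ m * norm (U x)) powr p \<le> lam powr p * supnorm (open_unit_ball N) (\<lambda>z. scX (monom_pow z \<alpha>0) x) powr p"
      using r1 by (simp add: \<alpha>0_def monom_pow_axis powr_mult mult.commute)
    also have "\<dots> \<le> lam powr p * norm x powr p"
      using mb(2) supnorm_nonneg[OF mb(1) ball_zero[OF NN]] p1 lam_pos
      by (intro mult_left_mono powr_mono2) auto
    also have "\<dots> = (lam * norm x) powr p" using lam_pos by (simp add: powr_mult)
    finally have "(r $ i ^ m * norm (U x)) powr p \<le> (lam * norm x) powr p" .
    then show "r $ i ^ m * norm (U x) \<le> lam * norm x"
      by (rule powr_cancel) (use r1 lam_pos in auto)
  qed
qed


definition KS :: "real set" where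
  "KS = {r. r \<ge> 0 \<and>
     (\<forall>f a. bhol_series scX unit_disc1 f a \<longrightarrow>
        (\<forall>z\<in>(\<lambda>w. r *\<^sub>R w) ` unit_disc1. \<forall>F. finite F \<longrightarrow>
           (\<Sum>\<alpha>\<in>F. norm (scY (monom_pow z \<alpha>) (U (a \<alpha>))) powr p)
             \<le> lam powr p * supnorm unit_disc1 f powr p))}"

lemma K_eq: "K_const scX scY U lam p unit_disc1 = Sup KS"
  unfolding K_const_def KS_def by simp

lemma KS_zero': "0 \<in> KS"
  unfolding KS_def by (rule KS_zero)

lemma KS_bdd: "bdd_above KS"
  by (rule bdd_aboveI[of _ 1]) (use KS_le1 in \<open>auto simp: KS_def\<close>)

lemma first_step:
  assumes Kr: "\<rho> \<in> KS" and s: "0 < s" "s < \<rho>"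
  shows "Aok (\<chi> i. if i = i0 then s else 0)"
proof -
  have K0: "\<forall>f a. bhol_series scX unit_disc1 f a \<longrightarrow>
        (\<forall>z\<in>(\<lambda>w. \<rho> *\<^sub>R w) ` unit_disc1. \<forall>F. finite F \<longrightarrow>
           (\<Sum>\<alpha>\<in>F. norm (scY (monom_pow z \<alpha>) (U (a \<alpha>))) powr p)
             \<le> lam powr p * supnorm unit_disc1 f powr p)"
    using Kr unfolding KS_def mem_Collect_eq by (rule conjunct2)
  note K = K0[rule_format]
  define v where "v = (\<chi> i. if i = i0 then s else (0::real))"
  define emb where "emb \<beta> = (\<chi> i. if i = i0 then \<beta> $ 1 else (0::nat))" for \<beta> :: "nat ^ 1"
  define P where "P w = (\<chi> i. if i = i0 then w $ 1 else (0::complex))" for w :: "complex ^ 1"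
  have inj: "inj emb"
    unfolding inj_def
  proof (intro allI impI)
    fix x y :: "nat ^ 1" assume "emb x = emb y"
    then have "emb x $ i0 = emb y $ i0" by simp
    then have "x $ 1 = y $ 1" by (simp add: emb_def)
    then show "x = y" by (metis vec1_eq)
  qed
  have notin: "\<not> (\<forall>i. i \<noteq> i0 \<longrightarrow> \<alpha> $ i = 0)" if "\<alpha> \<notin> range emb" for \<alpha>
  proof
    assume H: "\<forall>i. i \<noteq> i0 \<longrightarrow> \<alpha> $ i = 0"
    have "\<alpha> = emb (\<chi> _. \<alpha> $ i0)" using H by (auto simp: emb_def vec_eq_iff)
    with that show False by blast
  qed
  have monP: "monom_pow (P w) (emb \<beta>) = monom_pow w \<beta>" for w \<beta>
    by (simp add: P_def emb_def monom_pow_single monom_pow_1)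
  have monP0: "monom_pow (P w) \<alpha> = 0" if "\<alpha> \<notin> range emb" for w \<alpha>
    using notin[OF that] by (auto simp: P_def monom_pow_single)
  have monv: "monom_pow v (emb \<beta>) = s ^ (\<beta> $ 1)" for \<beta>
    by (simp add: v_def emb_def monom_pow_single)
  have monv0: "monom_pow v \<alpha> = 0" if "\<alpha> \<notin> range emb" for \<alpha>
    using notin[OF that] by (auto simp: v_def monom_pow_single)
  have Pin: "P w \<in> open_unit_ball N" if "w \<in> unit_disc1" for w
    using that by (simp add: P_def open_unit_ball_def N_single[OF NN] unit_disc1_def)
  have "Aok v"
    unfolding Aok_def
  proof (intro conjI allI impI)
    show "0 \<le> v $ i" for i using s by (simp add: v_def)
    fix f a and F :: "(nat ^ 'n) set"
    assume bh: "bhol_series scX (open_unit_ball N) f a" and fin: "finite F"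
    define g where "g w = f (P w)" for w
    define b where "b \<beta> = a (emb \<beta>)" for \<beta>
    have bhg: "bhol_series scX unit_disc1 g b"
      unfolding bhol_series_def
    proof (intro conjI ballI)
      fix w assume wD: "w \<in> unit_disc1"
      have h: "((\<lambda>\<alpha>. scX (monom_pow (P w) \<alpha>) (a \<alpha>)) has_sum f (P w)) UNIV"
        using bh Pin[OF wD] unfolding bhol_series_def by blast
      have "((\<lambda>\<alpha>. scX (monom_pow (P w) \<alpha>) (a \<alpha>)) has_sum f (P w)) (range emb) \<longleftrightarrow>
            ((\<lambda>\<alpha>. scX (monom_pow (P w) \<alpha>) (a \<alpha>)) has_sum f (P w)) UNIV"
        by (rule has_sum_cong_neutral) (auto simp: monP0 cs_zero_left[OF csX])
      with h have "((\<lambda>\<alpha>. scX (monom_pow (P w) \<alpha>) (a \<alpha>)) has_sum f (P w)) (range emb)" by blast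
      then have "(((\<lambda>\<alpha>. scX (monom_pow (P w) \<alpha>) (a \<alpha>)) \<circ> emb) has_sum f (P w)) UNIV"
        using has_sum_reindex[of emb UNIV] inj by blast
      then show "((\<lambda>\<beta>. scX (monom_pow w \<beta>) (b \<beta>)) has_sum g w) UNIV"
        by (simp add: o_def monP b_def g_def)
    next
      have "bounded (f ` open_unit_ball N)" using bh by (simp add: bhol_series_def)
      moreover have "g ` unit_disc1 \<subseteq> f ` open_unit_ball N" using Pin by (auto simp: g_def)
      ultimately show "bounded (g ` unit_disc1)" by (rule bounded_subset)
    qed
    have sup_le: "supnorm unit_disc1 g \<le> supnorm (open_unit_ball N) f"
      unfolding supnorm_def[of unit_disc1]
    proof (rule cSUP_least)
      show "unit_disc1 \<noteq> {}" using disc_zero by blast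
      fix w assume "w \<in> unit_disc1"
      then show "norm (g w) \<le> supnorm (open_unit_ball N) f"
        unfolding g_def by (intro supnorm_upper[OF bh] Pin)
    qed
    define G where "G = emb -` F"
    have finG: "finite G" using fin inj by (simp add: G_def finite_vimageI)
    have r0: "0 < \<rho>" using s by simp
    define z where "z = \<rho> *\<^sub>R (\<chi> _::1. complex_of_real (s / \<rho>))"
    have zin: "z \<in> (\<lambda>w. \<rho> *\<^sub>R w) ` unit_disc1"
      unfolding z_def using s r0 by (intro imageI) (simp add: unit_disc1_def norm_divide)
    have z1: "z $ 1 = complex_of_real s"
    proof -
      have "z $ 1 = \<rho> *\<^sub>R complex_of_real (s / \<rho>)" by (simp add: z_def)
      also have "\<dots> = complex_of_real (\<rho> * (s / \<rho>))" by (simp only: scaleR_conv_of_real of_real_mult)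
      also have "\<rho> * (s / \<rho>) = s" using r0 by simp
      finally show ?thesis .
    qed
    have KK: "(\<Sum>\<beta>\<in>G. norm (scY (monom_pow z \<beta>) (U (b \<beta>))) powr p) \<le> lam powr p * supnorm unit_disc1 g powr p"
      by (rule K[OF bhg zin finG])
    have "(\<Sum>\<alpha>\<in>F. norm (U (a \<alpha>)) powr p * (monom_pow v \<alpha>) powr p)
          = (\<Sum>\<alpha>\<in>F \<inter> range emb. norm (U (a \<alpha>)) powr p * (monom_pow v \<alpha>) powr p)"
      by (rule sum.mono_neutral_right) (use fin p1 in \<open>auto simp: monv0\<close>)
    also have "F \<inter> range emb = emb ` G" by (auto simp: G_def)
    also have "(\<Sum>\<alpha>\<in>emb ` G. norm (U (a \<alpha>)) powr p * (monom_pow v \<alpha>) powr p)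
          = (\<Sum>\<beta>\<in>G. norm (U (a (emb \<beta>))) powr p * (monom_pow v (emb \<beta>)) powr p)"
      using sum.reindex[OF inj_on_subset[OF inj subset_UNIV, of G], of "\<lambda>\<alpha>. norm (U (a \<alpha>)) powr p * (monom_pow v \<alpha>) powr p"]
      by (simp add: o_def)
    also have "\<dots> = (\<Sum>\<beta>\<in>G. norm (scY (monom_pow z \<beta>) (U (b \<beta>))) powr p)"
      using s by (intro sum.cong) (auto simp: monv b_def cs_norm[OF csY] monom_pow_1 z1 norm_power powr_mult mult.commute)
    also have "\<dots> \<le> lam powr p * supnorm unit_disc1 g powr p" by (rule KK)
    also have "\<dots> \<le> lam powr p * supnorm (open_unit_ball N) f powr p"
      using sup_le supnorm_nonneg[OF bhg disc_zero] p1 by (intro mult_left_mono powr_mono2) auto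
    finally show "(\<Sum>\<alpha>\<in>F. norm (U (a \<alpha>)) powr p * (monom_pow v \<alpha>) powr p) \<le> lam powr p * supnorm (open_unit_ball N) f powr p" .
  qed
  then show ?thesis by (simp add: v_def)
qed


lemma second_step:
  assumes Ar: "Aok r"
  shows "(\<Sum>i\<in>UNIV. r $ i) / real CARD('n) \<le> id_to_l1_norm N * Sup KS / real CARD('n) powr (1 / p)"
proof -
  have A0: "\<forall>f a. bhol_series scX (open_unit_ball N) f a \<longrightarrow>
        (\<forall>F. finite F \<longrightarrow>
           (\<Sum>\<alpha>\<in>F. norm (U (a \<alpha>)) powr p * (monom_pow r \<alpha>) powr p)
             \<le> lam powr p * supnorm (open_unit_ball N) f powr p)"
    using Ar unfolding Aok_def by (rule conjunct2)
  note A = A0[rule_format]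
  have r0: "\<And>i. 0 \<le> r $ i" using Ar unfolding Aok_def by blast
  define C where "C = id_to_l1_norm N"
  define n where "n = real CARD('n)"
  define s where "s = (\<Sum>i\<in>UNIV. r $ i)"
  define t where "t = s / n powr (1 - 1 / p)"
  define \<rho> where "\<rho> = t / C"
  have C1: "1 \<le> C" using C_ge1[OF NN] by (simp add: C_def)
  have n0: "0 < n" by (simp add: n_def)
  have s0: "0 \<le> s" using r0 by (simp add: s_def sum_nonneg)
  have t0: "0 \<le> t" using s0 n0 by (simp add: t_def)
  have rho0: "0 \<le> \<rho>" using t0 C1 by (simp add: \<rho>_def)
  have tp: "(t powr p) \<le> (\<Sum>i\<in>UNIV. r $ i powr p)"
  proof -
    have "t powr p = s powr p / (n powr (1 - 1 / p)) powr p" by (simp add: t_def powr_divide)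
    also have "(n powr (1 - 1 / p)) powr p = n powr (p - 1)"
      using p1 by (simp add: powr_powr algebra_simps)
    finally have "t powr p = s powr p / n powr (p - 1)" .
    moreover have "s powr p \<le> n powr (p - 1) * (\<Sum>i\<in>UNIV. r $ i powr p)"
      unfolding s_def n_def by (rule power_mean_powr[OF r0 p1])
    ultimately show ?thesis using n0 by (simp add: divide_le_eq mult.commute)
  qed
  have rhoKS: "\<rho> \<in> KS"
    unfolding KS_def mem_Collect_eq
  proof (intro conjI allI impI ballI)
    show "0 \<le> \<rho>" by (rule rho0)
    fix g b and z :: "complex ^ 1" and G :: "(nat ^ 1) set"
    assume bh: "bhol_series scX unit_disc1 g b" and zin: "z \<in> (\<lambda>w. \<rho> *\<^sub>R w) ` unit_disc1" and finG: "finite G"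
    from zin obtain w where wD: "w \<in> unit_disc1" and zw: "z = \<rho> *\<^sub>R w" by blast
    have zle: "cmod (z $ 1) \<le> \<rho>"
    proof -
      have "cmod (z $ 1) = \<rho> * cmod (w $ 1)" using rho0 by (simp add: zw)
      also have "\<dots> \<le> \<rho> * 1" using wD rho0 by (intro mult_left_mono) (auto simp: unit_disc1_def)
      finally show ?thesis by simp
    qed
    note cb = compose_bhol[OF csX bh NN]
    define a' where "a' \<alpha> = scX (complex_of_real (real (mc \<alpha>) / C ^ deg \<alpha>)) (b (\<chi> _. deg \<alpha>))" for \<alpha> :: "nat ^ 'n"
    have AF: "(\<Sum>\<alpha>\<in>H. norm (U (a' \<alpha>)) powr p * (monom_pow r \<alpha>) powr p) \<le> lam powr p * supnorm unit_disc1 g powr p"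
      if "finite H" for H
    proof -
      have "(\<Sum>\<alpha>\<in>H. norm (U (a' \<alpha>)) powr p * (monom_pow r \<alpha>) powr p)
         \<le> lam powr p * supnorm (open_unit_ball N) (\<lambda>z. g (\<chi> _. (\<Sum>i\<in>UNIV. z $ i) / complex_of_real C)) powr p"
        unfolding a'_def C_def by (rule A[OF cb(1) that])
      also have "\<dots> \<le> lam powr p * supnorm unit_disc1 g powr p"
        using cb(2) supnorm_nonneg[OF cb(1) ball_zero[OF NN]] p1 unfolding C_def
        by (intro mult_left_mono powr_mono2) auto
      finally show ?thesis .
    qed
    have perb: "norm (scY (monom_pow z \<beta>) (U (b \<beta>))) powr p
        \<le> (\<Sum>\<alpha>\<in>lev (\<beta> $ 1). norm (U (a' \<alpha>)) powr p * (monom_pow r \<alpha>) powr p)" for \<beta>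
    proof -
      define m where "m = \<beta> $ 1"
      define u where "u = norm (U (b \<beta>))"
      have u0: "0 \<le> u" by (simp add: u_def)
      have bb: "b (\<chi> _. m) = b \<beta>" unfolding m_def by (simp only: vec1_eq[of \<beta>, symmetric])
      have "norm (scY (monom_pow z \<beta>) (U (b \<beta>))) powr p = (cmod (z $ 1) ^ m * u) powr p"
        by (simp add: cs_norm[OF csY] monom_pow_1 norm_power u_def m_def)
      also have "\<dots> \<le> (\<rho> ^ m * u) powr p"
        using zle u0 p1 by (intro powr_mono2 mult_right_mono power_mono) auto
      also have "\<rho> ^ m * u = (u / C ^ m) * t ^ m"
        using C1 by (simp add: \<rho>_def power_divide)
      also have "((u / C ^ m) * t ^ m) powr p = (u / C ^ m) powr p * (t powr p) ^ m"
        using u0 C1 t0 by (simp only: powr_mult power_powr_nonneg[OF t0])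
      also have "\<dots> \<le> (u / C ^ m) powr p * (\<Sum>i\<in>UNIV. r $ i powr p) ^ m"
        using tp t0 by (intro mult_left_mono power_mono) auto
      also have "(\<Sum>i\<in>UNIV. r $ i powr p) ^ m = (\<Sum>\<alpha>\<in>lev m. real (mc \<alpha>) * monom_pow (\<chi> i. r $ i powr p) \<alpha>)"
        using multinomial[of "\<chi> i. r $ i powr p" m] by simp
      also have "\<dots> \<le> (\<Sum>\<alpha>\<in>lev m. real (mc \<alpha>) powr p * (monom_pow r \<alpha>) powr p)"
      proof (intro sum_mono)
        fix \<alpha> :: "nat ^ 'n"
        have mcp: "real (mc \<alpha>) \<le> real (mc \<alpha>) powr p"
        proof (cases "mc \<alpha> = 0")
          case True then show ?thesis by simp
        next
          case False
          then have "1 \<le> real (mc \<alpha>)" by simp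
          then have "real (mc \<alpha>) powr 1 \<le> real (mc \<alpha>) powr p" using p1 by (intro powr_mono) auto
          then show ?thesis by simp
        qed
        show "real (mc \<alpha>) * monom_pow (\<chi> i. r $ i powr p) \<alpha> \<le> real (mc \<alpha>) powr p * (monom_pow r \<alpha>) powr p"
          using mcp by (simp add: monom_pow_powr[OF r0] mult_right_mono monom_pow_nonneg)
      qed
      also have "(u / C ^ m) powr p * \<dots> = (\<Sum>\<alpha>\<in>lev m. norm (U (a' \<alpha>)) powr p * (monom_pow r \<alpha>) powr p)"
      proof -
        have "norm (U (a' \<alpha>)) = real (mc \<alpha>) / C ^ m * u" if "\<alpha> \<in> lev m" for \<alpha>
          using that C1 Uc by (simp add: a'_def lev_def cs_norm[OF csY] bb u_def norm_divide norm_power)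
        then have "norm (U (a' \<alpha>)) powr p * (monom_pow r \<alpha>) powr p = (u / C ^ m) powr p * (real (mc \<alpha>) powr p * (monom_pow r \<alpha>) powr p)"
          if "\<alpha> \<in> lev m" for \<alpha>
          using that C1 u0 by (simp add: powr_mult powr_divide mult.commute mult.left_commute)
        then have "(\<Sum>\<alpha>\<in>lev m. norm (U (a' \<alpha>)) powr p * (monom_pow r \<alpha>) powr p)
              = (\<Sum>\<alpha>\<in>lev m. (u / C ^ m) powr p * (real (mc \<alpha>) powr p * (monom_pow r \<alpha>) powr p))"
          by (intro sum.cong) auto
        then show ?thesis by (simp only: sum_distrib_left)
      qed
      finally show ?thesis unfolding m_def by (meson mult_left_mono powr_ge_zero)
    qed
    have "(\<Sum>\<beta>\<in>G. norm (scY (monom_pow z \<beta>) (U (b \<beta>))) powr p)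
        \<le> (\<Sum>\<beta>\<in>G. \<Sum>\<alpha>\<in>lev (\<beta> $ 1). norm (U (a' \<alpha>)) powr p * (monom_pow r \<alpha>) powr p)"
      by (intro sum_mono perb)
    also have "\<dots> = (\<Sum>\<alpha>\<in>(\<Union>\<beta>\<in>G. lev (\<beta> $ 1)). norm (U (a' \<alpha>)) powr p * (monom_pow r \<alpha>) powr p)"
    proof (rule sum.UNION_disjoint[symmetric])
      show "finite G" by (rule finG)
      show "\<forall>\<beta>\<in>G. finite (lev (\<beta> $ 1) :: (nat ^ 'n) set)" by (simp add: finite_lev)
      show "\<forall>\<beta>\<in>G. \<forall>\<beta>'\<in>G. \<beta> \<noteq> \<beta>' \<longrightarrow> lev (\<beta> $ 1) \<inter> (lev (\<beta>' $ 1) :: (nat ^ 'n) set) = {}"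
      proof (intro ballI impI)
        fix \<beta> \<beta>' :: "nat ^ 1" assume "\<beta> \<noteq> \<beta>'"
        then have "\<beta> $ 1 \<noteq> \<beta>' $ 1" by (metis vec1_eq)
        then show "lev (\<beta> $ 1) \<inter> (lev (\<beta>' $ 1) :: (nat ^ 'n) set) = {}" by (auto simp: lev_def)
      qed
    qed
    also have "\<dots> \<le> lam powr p * supnorm unit_disc1 g powr p"
      by (rule AF) (use finG finite_lev in auto)
    finally show "(\<Sum>\<beta>\<in>G. norm (scY (monom_pow z \<beta>) (U (b \<beta>))) powr p) \<le> lam powr p * supnorm unit_disc1 g powr p" .
  qed
  have rhoK: "\<rho> \<le> Sup KS" by (rule cSup_upper[OF rhoKS KS_bdd])
  have "s / n = C * \<rho> / n powr (1 / p)"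
  proof -
    have "n powr (1 - 1 / p) * n powr (1 / p) = n"
      using n0 by (simp add: powr_add[symmetric])
    then show ?thesis using C1 n0 by (simp add: \<rho>_def t_def field_simps)
  qed
  also have "\<dots> \<le> C * Sup KS / n powr (1 / p)"
    using rhoK C1 n0 by (intro divide_right_mono mult_left_mono) auto
  finally show ?thesis by (simp add: s_def n_def C_def)
qed

end


theorem mainTheorem18:
  fixes scX :: "complex \<Rightarrow> 'x::banach \<Rightarrow> 'x"
    and scY :: "complex \<Rightarrow> 'y::banach \<Rightarrow> 'y"
    and U :: "'x \<Rightarrow> 'y"
    and lam p :: real
    and N :: "complex ^ 'n \<Rightarrow> real"
  assumes "complex_scaling scX" and "complex_scaling scY"
    and "bounded_linear U" and "\<forall>c x. U (scX c x) = scY c (U x)"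
    and "U \<noteq> (\<lambda>x. 0)"
    and "onorm U < lam"
    and "1 \<le> p"
    and "normalized_1_unconditional_norm N"
  shows "K_const scX scY U lam p unit_disc1 / real CARD('n)
           \<le> A_const scX U lam p (open_unit_ball N)
       \<and> A_const scX U lam p (open_unit_ball N)
           \<le> id_to_l1_norm N * K_const scX scY U lam p unit_disc1 / real CARD('n) powr (1 / p)"
proof -
  note H = assms
  have Ke: "K_const scX scY U lam p unit_disc1 = Sup (KS scX scY U lam p)" by (rule K_eq[OF H])
  define AS where "AS = {(\<Sum>i\<in>UNIV. r $ i) / real CARD('n) | r. Aok scX U lam p N r}"
  have Ae: "A_const scX U lam p (open_unit_ball N) = Sup AS" unfolding AS_def by (rule A_eq[OF H])
  have n0: "0 < real CARD('n)" by simp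
  have AS0: "0 \<in> AS"
    unfolding AS_def by (rule CollectI, rule exI[of _ 0]) (simp add: Aok_zero[OF H])
  have ASbdd: "bdd_above AS"
  proof (rule bdd_aboveI[of _ 1])
    fix y assume "y \<in> AS"
    then obtain r where y: "y = (\<Sum>i\<in>UNIV. r $ i) / real CARD('n)" and Ar: "Aok scX U lam p N r"
      unfolding AS_def by blast
    have "(\<Sum>i\<in>UNIV. r $ i) \<le> (\<Sum>i\<in>(UNIV::'n set). 1)"
      by (intro sum_mono Aok_le1[OF H Ar])
    then show "y \<le> 1" using n0 by (simp add: y divide_le_eq)
  qed
  have SA0: "0 \<le> Sup AS" by (rule cSup_upper[OF AS0 ASbdd])
  have part1: "Sup (KS scX scY U lam p) \<le> real CARD('n) * Sup AS"
  proof (rule cSup_least)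
    show "KS scX scY U lam p \<noteq> {}" using KS_zero'[OF H] by blast
    fix \<rho> assume rK: "\<rho> \<in> KS scX scY U lam p"
    show "\<rho> \<le> real CARD('n) * Sup AS"
    proof (cases "\<rho> \<le> 0")
      case True
      then show ?thesis using SA0 n0 by (smt (verit) mult_nonneg_nonneg)
    next
      case False
      then have r0: "0 < \<rho>" by simp
      show ?thesis
      proof (rule dense_le_bounded[OF r0])
        fix s assume s: "0 < s" "s < \<rho>"
        have Av: "Aok scX U lam p N (\<chi> i. if i = undefined then s else 0)"
          by (rule first_step[OF H rK s])
        have "(\<Sum>i\<in>UNIV. (\<chi> i. if i = (undefined::'n) then s else 0) $ i) = s" by simp
        then have "s / real CARD('n) \<in> AS" unfolding AS_def using Av by force
        then have "s / real CARD('n) \<le> Sup AS" by (rule cSup_upper[OF _ ASbdd])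
        then show "s \<le> real CARD('n) * Sup AS" using n0 by (simp add: divide_le_eq mult.commute)
      qed
    qed
  qed
  have part2: "Sup AS \<le> id_to_l1_norm N * Sup (KS scX scY U lam p) / real CARD('n) powr (1 / p)"
  proof (rule cSup_least)
    show "AS \<noteq> {}" using AS0 by blast
    fix y assume "y \<in> AS"
    then obtain r where y: "y = (\<Sum>i\<in>UNIV. r $ i) / real CARD('n)" and Ar: "Aok scX U lam p N r"
      unfolding AS_def by blast
    show "y \<le> id_to_l1_norm N * Sup (KS scX scY U lam p) / real CARD('n) powr (1 / p)"
      unfolding y by (rule second_step[OF H Ar])
  qed
  show ?thesis
    using part1 part2 n0 unfolding Ke Ae by (simp add: divide_le_eq mult.commute)
qed

end
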